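(* Let $F\subseteq P_{3,4}$ be a face. Suppose there exist $f\in J_F$ and $g,c,d\in H_2$ such that $c\notin J_F$, $c-d\in J_F$, and $fg=cd$. Then $F$ is not exposed. In particular, this holds if there exist $f\in J_F$, $g\in H_2$ and $c\in H_2\setminus J_F$ with $fg=c^2$.
   Context: $H_k\subseteq\mathbb R[x,y,z]$: real ternary forms of degree $k$; $P_{3,4}=\{f\in H_4: f\ge0\text{ on }\mathbb P^2(\mathbb R)\}$. A face of $P_{3,4}$ is a convex subcone $F$ such that $a,b\in P_{3,4}$, $a+b\in F$ imply $a,b\in F$; it is exposed if $F=\ker L\cap P_{3,4}$ for a linear functional $L$ on $H_4$ nonnegative on $P_{3,4}$. $J_F=\{q\in H_2: q^2\in F\}$ (a linear subspace). *)

theory Defs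
  imports Main "HOL.Real"
begin

text \<open>Real ternary forms are represented by their polynomial functions on R^3
(faithful since R is infinite). Points are triples (x,y,z).\<close>

type_synonym tform = "real \<times> real \<times> real \<Rightarrow> real"

definition H :: "nat \<Rightarrow> tform set" where
  "H k = {f. \<exists>a :: nat \<Rightarrow> nat \<Rightarrow> real. \<forall>x y z.
      f (x, y, z) = (\<Sum>i\<le>k. \<Sum>j\<le>k - i. a i j * x ^ i * y ^ j * z ^ (k - i - j))}"

definition P34 :: "tform set" where
  "P34 = {f \<in> H 4. \<forall>v. f v \<ge> 0}"

definition is_face :: "tform set \<Rightarrow> bool" where
  "is_face F \<longleftrightarrow> F \<subseteq> P34
     \<and> (\<forall>a\<in>F. \<forall>b\<in>F. (\<lambda>v. a v + b v) \<in> F)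
     \<and> (\<forall>a\<in>F. \<forall>t::real. t \<ge> 0 \<longrightarrow> (\<lambda>v. t * a v) \<in> F)
     \<and> (\<forall>a\<in>P34. \<forall>b\<in>P34. (\<lambda>v. a v + b v) \<in> F \<longrightarrow> a \<in> F \<and> b \<in> F)"

definition linear_on_H4 :: "(tform \<Rightarrow> real) \<Rightarrow> bool" where
  "linear_on_H4 L \<longleftrightarrow>
     (\<forall>a\<in>H 4. \<forall>b\<in>H 4. L (\<lambda>v. a v + b v) = L a + L b)
     \<and> (\<forall>a\<in>H 4. \<forall>t::real. L (\<lambda>v. t * a v) = t * L a)"

definition is_exposed_face :: "tform set \<Rightarrow> bool" where
  "is_exposed_face F \<longleftrightarrow> is_face F \<and>
     (\<exists>L. linear_on_H4 L \<and> (\<forall>p\<in>P34. L p \<ge> 0) \<and> F = {p \<in> P34. L p = 0})"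

definition J :: "tform set \<Rightarrow> tform set" where
  "J F = {q \<in> H 2. (\<lambda>v. (q v)\<^sup>2) \<in> F}"

end

theory Submission
  imports Defs
begin

definition mono3 :: "nat \<Rightarrow> nat \<Rightarrow> nat \<Rightarrow> tform" where
  "mono3 k i j = (\<lambda>(x,y,z). x^i*y^j*z^(k-i-j))"

lemma H_alt: "f \<in> H k \<longleftrightarrow> (\<exists>a. f = (\<lambda>v. \<Sum>i\<le>k. \<Sum>j\<le>k-i. a i j * mono3 k i j v))"
  unfolding H_def mono3_def
  apply (auto simp: fun_eq_iff mult.assoc)
  done

lemma H_add: "f \<in> H k \<Longrightarrow> g \<in> H k \<Longrightarrow> (\<lambda>v. f v + g v) \<in> H k"
  unfolding H_alt
  apply clarify
  subgoal for a b
    by (rule exI[of _ "\<lambda>i j. a i j + b i j"]) (simp add: distrib_right sum.distrib)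
  done

lemma H_scale: "f \<in> H k \<Longrightarrow> (\<lambda>v. t * f v) \<in> H k"
  unfolding H_alt
  apply clarify
  subgoal for a
    by (rule exI[of _ "\<lambda>i j. t * a i j"]) (simp add: sum_distrib_left mult.assoc)
  done

lemma H_zero: "(\<lambda>v. 0) \<in> H k"
  unfolding H_alt by (rule exI[of _ "\<lambda>i j. 0"]) simp

lemma H_sum: "finite A \<Longrightarrow> (\<And>i. i \<in> A \<Longrightarrow> F i \<in> H k) \<Longrightarrow> (\<lambda>v. \<Sum>i\<in>A. F i v) \<in> H k"
proof (induction A rule: finite_induct)
  case empty then show ?case using H_zero by simp
next
  case (insert x A)
  then show ?case using H_add[of "F x" k "\<lambda>v. \<Sum>i\<in>A. F i v"] by simp
qed

lemma if01_mult: "(if P then 1 else 0) * (x::real) = (if P then x else 0)" by simp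

lemma H_mono: "i + j \<le> k \<Longrightarrow> mono3 k i j \<in> H k"
  unfolding H_alt
proof (rule exI[of _ "\<lambda>i' j'. if i' = i \<and> j' = j then 1 else 0"], rule ext)
  fix v
  assume ij: "i + j \<le> k"
  have "(\<Sum>i'\<le>k. \<Sum>j'\<le>k-i'. (if i' = i \<and> j' = j then 1 else 0) * mono3 k i' j' v)
      = (\<Sum>i'\<le>k. if i' = i then (\<Sum>j'\<le>k-i'. if j' = j then mono3 k i' j' v else 0) else 0)"
    by (rule sum.cong) (auto simp: if01_mult)
  also have "\<dots> = mono3 k i j v" using ij by (subgoal_tac "j \<le> k - i") (simp, arith)
  finally show "mono3 k i j v = (\<Sum>i'\<le>k. \<Sum>j'\<le>k-i'. (if i' = i \<and> j' = j then 1 else 0) * mono3 k i' j' v)"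
    by simp
qed

lemma mono_mult: "i + j \<le> 2 \<Longrightarrow> i' + j' \<le> 2 \<Longrightarrow>
   mono3 2 i j v * mono3 2 i' j' v = mono3 4 (i+i') (j+j') v"
proof -
  assume a1: "i + j \<le> 2" and a2: "i' + j' \<le> 2"
  obtain x y z where v: "v = (x,y,z)" by (cases v) auto
  have e: "4 - (i+i') - (j+j') = (2-i-j) + (2-i'-j')" using a1 a2 by arith
  show ?thesis unfolding mono3_def v e by (simp add: power_add algebra_simps)
qed

lemma H_mult: assumes "f \<in> H 2" "g \<in> H 2" shows "(\<lambda>v. f v * g v) \<in> H 4"
proof -
  obtain a where a: "f = (\<lambda>v. \<Sum>i\<le>2. \<Sum>j\<le>2-i. a i j * mono3 2 i j v)"
    using assms(1) unfolding H_alt by blast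
  obtain b where b: "g = (\<lambda>v. \<Sum>i\<le>2. \<Sum>j\<le>2-i. b i j * mono3 2 i j v)"
    using assms(2) unfolding H_alt by blast
  have eq: "(\<lambda>v. f v * g v) = (\<lambda>v. \<Sum>i\<le>2. \<Sum>j\<le>2-i. \<Sum>i'\<le>2. \<Sum>j'\<le>2-i'.
       (a i j * b i' j') * mono3 4 (i+i') (j+j') v)"
  proof (rule ext)
    fix v
    have "f v * g v = (\<Sum>i\<le>2. \<Sum>j\<le>2-i. \<Sum>i'\<le>2. \<Sum>j'\<le>2-i'.
       (a i j * mono3 2 i j v) * (b i' j' * mono3 2 i' j' v))"
      unfolding a b sum_distrib_right unfolding sum_distrib_left ..
    also have "\<dots> = (\<Sum>i\<le>2. \<Sum>j\<le>2-i. \<Sum>i'\<le>2. \<Sum>j'\<le>2-i'.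
       (a i j * b i' j') * mono3 4 (i+i') (j+j') v)"
      by (intro sum.cong refl) (simp add: mono_mult[symmetric] algebra_simps)
    finally show "f v * g v = \<dots>" .
  qed
  show ?thesis unfolding eq
    by (intro H_sum finite_atMost H_scale H_mono) auto
qed

lemma H_lin2: "f \<in> H 2 \<Longrightarrow> g \<in> H 2 \<Longrightarrow> (\<lambda>v. s * f v + g v) \<in> H 2"
  using H_add H_scale by blast

lemma Ladd: "linear_on_H4 L \<Longrightarrow> a \<in> H 4 \<Longrightarrow> b \<in> H 4 \<Longrightarrow> L (\<lambda>v. a v + b v) = L a + L b"
  unfolding linear_on_H4_def by blast

lemma Lsc: "linear_on_H4 L \<Longrightarrow> a \<in> H 4 \<Longrightarrow> L (\<lambda>v. t * a v) = t * L a"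
  unfolding linear_on_H4_def by blast

lemma CS:
  assumes lin: "linear_on_H4 L" and pos: "\<forall>p\<in>P34. L p \<ge> 0"
    and q: "q \<in> H 2" and h: "h \<in> H 2" and z: "L (\<lambda>v. q v * q v) = 0"
  shows "L (\<lambda>v. q v * h v) = 0"
proof -
  have Hqq: "(\<lambda>v. q v * q v) \<in> H 4" and Hqh: "(\<lambda>v. q v * h v) \<in> H 4"
    and Hhh: "(\<lambda>v. h v * h v) \<in> H 4" using H_mult q h by auto
  have key: "2 * t * L (\<lambda>v. q v * h v) + L (\<lambda>v. h v * h v) \<ge> 0" for t
  proof -
    have Ht: "(\<lambda>v. t * q v + h v) \<in> H 2" using H_lin2 q h by blast
    have P: "(\<lambda>v. (t * q v + h v) * (t * q v + h v)) \<in> P34"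
      unfolding P34_def using H_mult[OF Ht Ht] by simp
    have e: "(\<lambda>v. (t * q v + h v) * (t * q v + h v)) =
       (\<lambda>v. (t*t) * (q v * q v) + ((2*t) * (q v * h v) + h v * h v))"
      by (rule ext) (simp add: algebra_simps)
    have "L (\<lambda>v. (t*t) * (q v * q v) + ((2*t) * (q v * h v) + h v * h v))
        = (t*t) * L (\<lambda>v. q v * q v) + ((2*t) * L (\<lambda>v. q v * h v) + L (\<lambda>v. h v * h v))"
    proof -
      have "L (\<lambda>v. (t*t) * (q v * q v) + ((2*t) * (q v * h v) + h v * h v))
          = L (\<lambda>v. (t*t) * (q v * q v)) + L (\<lambda>v. (2*t) * (q v * h v) + h v * h v)"
        using Ladd[OF lin H_scale[OF Hqq] H_add[OF H_scale[OF Hqh] Hhh]] by simp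
      also have "L (\<lambda>v. (2*t) * (q v * h v) + h v * h v)
          = L (\<lambda>v. (2*t) * (q v * h v)) + L (\<lambda>v. h v * h v)"
        using Ladd[OF lin H_scale[OF Hqh] Hhh] by simp
      finally show ?thesis using Lsc[OF lin Hqq, of "t*t"] Lsc[OF lin Hqh, of "2*t"] by simp
    qed
    then have "L (\<lambda>v. (t * q v + h v) * (t * q v + h v)) = 2 * t * L (\<lambda>v. q v * h v) + L (\<lambda>v. h v * h v)"
      using e z by simp
    moreover have "L (\<lambda>v. (t * q v + h v) * (t * q v + h v)) \<ge> 0" using pos P by blast
    ultimately show ?thesis by simp
  qed
  show ?thesis
  proof (rule ccontr)
    assume ne: "L (\<lambda>v. q v * h v) \<noteq> 0"
    define t where "t = - (L (\<lambda>v. h v * h v) + 1) / (2 * L (\<lambda>v. q v * h v))"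
    have "2 * t * L (\<lambda>v. q v * h v) = - (L (\<lambda>v. h v * h v) + 1)"
      unfolding t_def using ne by (simp add: field_simps)
    with key[of t] show False by linarith
  qed
qed

lemma sq_eq: "(\<lambda>v. (q v)\<^sup>2) = (\<lambda>v. q v * (q::tform) v)"
  by (simp add: power2_eq_square)

theorem mainTheorem17:
  assumes "is_face F"
  shows "(\<forall>f g c d. f \<in> J F \<and> g \<in> H 2 \<and> c \<in> H 2 \<and> d \<in> H 2
            \<and> c \<notin> J F \<and> (\<lambda>v. c v - d v) \<in> J F
            \<and> (\<forall>v. f v * g v = c v * d v)
          \<longrightarrow> \<not> is_exposed_face F)
       \<and> (\<forall>f g c. f \<in> J F \<and> g \<in> H 2 \<and> c \<in> H 2 \<and> c \<notin> J F
            \<and> (\<forall>v. f v * g v = (c v)\<^sup>2)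
          \<longrightarrow> \<not> is_exposed_face F)"
proof (intro conjI allI impI notI)
  fix f g c d
  assume A: "f \<in> J F \<and> g \<in> H 2 \<and> c \<in> H 2 \<and> d \<in> H 2
            \<and> c \<notin> J F \<and> (\<lambda>v. c v - d v) \<in> J F \<and> (\<forall>v. f v * g v = c v * d v)"
    and E: "is_exposed_face F"
  then obtain L where lin: "linear_on_H4 L" and pos: "\<forall>p\<in>P34. L p \<ge> 0"
    and FL: "F = {p \<in> P34. L p = 0}" unfolding is_exposed_face_def by blast
  define e where "e = (\<lambda>v. c v - d v)"
  have f2: "f \<in> H 2" "L (\<lambda>v. f v * f v) = 0" using A FL unfolding J_def sq_eq by auto
  have e2: "e \<in> H 2" "L (\<lambda>v. e v * e v) = 0" using A FL unfolding J_def sq_eq e_def by auto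
  have "L (\<lambda>v. f v * g v) = 0" using CS[OF lin pos f2(1) _ f2(2)] A by blast
  moreover have "(\<lambda>v. f v * g v) = (\<lambda>v. c v * d v)" using A by auto
  ultimately have cd: "L (\<lambda>v. c v * d v) = 0" by simp
  have ec: "L (\<lambda>v. e v * c v) = 0" using CS[OF lin pos e2(1) _ e2(2)] A by blast
  have "(\<lambda>v. c v * c v) = (\<lambda>v. e v * c v + c v * d v)" unfolding e_def
    by (rule ext) (simp add: algebra_simps)
  moreover have "L (\<lambda>v. e v * c v + c v * d v) = L (\<lambda>v. e v * c v) + L (\<lambda>v. c v * d v)"
  proof -
    have h1: "(\<lambda>v. e v * c v) \<in> H 4" using H_mult[OF e2(1), of c] A by blast
    have h2: "(\<lambda>v. c v * d v) \<in> H 4" using H_mult[of c d] A by blast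
    have "\<forall>a\<in>H 4. \<forall>b\<in>H 4. L (\<lambda>v. a v + b v) = L a + L b" using lin unfolding linear_on_H4_def by blast
    from bspec[OF bspec[OF this h1] h2] show ?thesis by simp
  qed
  ultimately have "L (\<lambda>v. c v * c v) = 0" using cd ec by simp
  moreover have "(\<lambda>v. c v * c v) \<in> P34" unfolding P34_def using H_mult A by auto
  ultimately have "c \<in> J F" using A FL unfolding J_def sq_eq by auto
  then show False using A by blast
next
  fix f g c
  assume A: "f \<in> J F \<and> g \<in> H 2 \<and> c \<in> H 2 \<and> c \<notin> J F \<and> (\<forall>v. f v * g v = (c v)\<^sup>2)"
    and E: "is_exposed_face F"
  then obtain L where lin: "linear_on_H4 L" and pos: "\<forall>p\<in>P34. L p \<ge> 0"
    and FL: "F = {p \<in> P34. L p = 0}" unfolding is_exposed_face_def by blast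
  have f2: "f \<in> H 2" "L (\<lambda>v. f v * f v) = 0" using A FL unfolding J_def sq_eq by auto
  have "L (\<lambda>v. f v * g v) = 0" using CS[OF lin pos f2(1) _ f2(2)] A by blast
  moreover have "(\<lambda>v. f v * g v) = (\<lambda>v. c v * c v)" using A by (auto simp: power2_eq_square)
  ultimately have "L (\<lambda>v. c v * c v) = 0" by simp
  moreover have "(\<lambda>v. c v * c v) \<in> P34" unfolding P34_def using H_mult A by auto
  ultimately have "c \<in> J F" using A FL unfolding J_def sq_eq by auto
  then show False using A by blast
qed

end
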